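(* Let $\mathscr{P}$ be a stationary ergodic stochastic process over a finite alphabet $\Sigma$ whose set $\overline{Q}^+$ of atomic accumulation causal states is finite and satisfies $\sum_{\nu\in\overline{Q}^+}p(\nu)=1$. Then the process generated by the PFSA $G=(\Sigma,\overline{Q}^+,\delta,\tilde\pi)$ with $\delta(\nu,\sigma)=\nu_\sigma$ and $\tilde\pi(\nu,\sigma)=\nu(\sigma\Sigma^\omega)$ is exactly $\mathscr{P}$; in fact the stationary distribution $\mathbf{p}_G$ of $G$ satisfies $\mathbf{p}_G(\nu)=p(\nu)$ for all $\nu\in\overline{Q}^+$.
   Context: $\mathcal{M}_\Sigma$ denotes the set of probability measures on $\Sigma^\omega$ with the $\sigma$-field generated by the cylinders $x\Sigma^\omega$. For $x=\sigma_1\cdots\sigma_n$, $Pr(x)=Pr(X_1\cdots X_n=\sigma_1\cdots\sigma_n)$; for $Pr(x)>0$, $\mu_x(y\Sigma^\omega)=Pr(xy)/Pr(x)$; causal states are classes $[x]$ (with $Pr(x)>0$) under $x\sim y\iff\mu_x=\mu_y$, $\mu_{[x]}=\mu_x$. For $\nu\in\mathcal{M}_\Sigma$: $B_{d,\varepsilon}(\nu)=\{\nu':\sum_{x\in\Sigma^d}|\nu'(x\Sigma^\omega)-\nu(x\Sigma^\omega)|<\varepsilon\}$; $p_{l,d,\varepsilon}(\nu)=\sum\{Pr(x):x\in\Sigma^l,Pr(x)>0,\mu_{[x]}\in B_{d,\varepsilon}(\nu)\}$; $\nu$ is an accumulation causal state if $p_{d,\varepsilon}(\nu)=\liminf_{l\to\infty}p_{l,d,\varepsilon}(\nu)>0$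 for all $d\in\mathbb{N}^+,\varepsilon>0$; $p(\nu)=\lim_{d\to\infty}\lim_{\varepsilon\to0}p_{d,\varepsilon}(\nu)$; $\overline{Q}^+$ is the set of accumulation causal states with $p(\nu)>0$. Translation: $\nu_\sigma(x\Sigma^\omega)=\nu(\sigma x\Sigma^\omega)/\nu(\sigma\Sigma^\omega)$ for $\nu(\sigma\Sigma^\omega)>0$ ($\delta(\nu,\sigma)$ undefined otherwise). A PFSA $(\Sigma,Q,\delta,\tilde\pi)$ emits $\sigma$ from state $q$ with probability $\tilde\pi(q,\sigma)$ and moves to $\delta(q,\sigma)$; its initial state is drawn from the stationary distribution $\mathbf{p}_G$ of the transition matrix $\pi(q,q')=\sum_{\sigma:\delta(q,\sigma)=q'}\tilde\pi(q,\sigma)$. *)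

theory Defs
  imports "HOL-Probability.Probability"
begin

text \<open>The sequence space \<Sigma>^\<omega> with the sigma-field generated by cylinders
  (product sigma-field on streams over the discrete finite alphabet).\<close>
abbreviation SS :: "'a stream measure" where
  "SS \<equiv> stream_space (count_space UNIV)"

definition cyl :: "'a list \<Rightarrow> 'a stream set" where
  "cyl x = {\<omega> \<in> space SS. stake (length x) \<omega> = x}"

definition seq_prob :: "'a stream measure \<Rightarrow> bool" where
  "seq_prob \<nu> \<longleftrightarrow> prob_space \<nu> \<and> sets \<nu> = sets SS"

definition Pr :: "'a stream measure \<Rightarrow> 'a list \<Rightarrow> real" where
  "Pr M x = measure M (cyl x)"

text \<open>Future measure \<mu>_x: conditioning on the cylinder x\<Sigma>^\<omega> and shifting away x,
  so that \<mu>_x(y\<Sigma>^\<omega>) = Pr(xy)/Pr(x).  The translation \<nu>_\<sigma> is \<open>future \<nu> [\<sigma>]\<close>.\<close>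
definition future :: "'a stream measure \<Rightarrow> 'a list \<Rightarrow> 'a stream measure" where
  "future M x = distr (uniform_measure M (cyl x)) SS (sdrop (length x))"

definition stationary_proc :: "'a stream measure \<Rightarrow> bool" where
  "stationary_proc M \<longleftrightarrow> distr M SS stl = M"

definition ergodic_proc :: "'a stream measure \<Rightarrow> bool" where
  "ergodic_proc M \<longleftrightarrow>
     (\<forall>A \<in> sets M. stl -` A \<inter> space M = A \<longrightarrow> measure M A = 0 \<or> measure M A = 1)"

definition ball_de :: "nat \<Rightarrow> real \<Rightarrow> 'a stream measure \<Rightarrow> 'a stream measure set" where
  "ball_de d \<epsilon> \<nu> = {\<nu>'. seq_prob \<nu>' \<and>
      (\<Sum>x\<in>{xs::'a list. length xs = d}. \<bar>Pr \<nu>' x - Pr \<nu> x\<bar>) < \<epsilon>}"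

definition p_lde :: "'a stream measure \<Rightarrow> nat \<Rightarrow> nat \<Rightarrow> real \<Rightarrow> 'a stream measure \<Rightarrow> real" where
  "p_lde M l d \<epsilon> \<nu> = (\<Sum>x\<in>{xs::'a list. length xs = l \<and> Pr M xs > 0 \<and> future M xs \<in> ball_de d \<epsilon> \<nu>}. Pr M x)"

definition p_de :: "'a stream measure \<Rightarrow> nat \<Rightarrow> real \<Rightarrow> 'a stream measure \<Rightarrow> ereal" where
  "p_de M d \<epsilon> \<nu> = liminf (\<lambda>l. ereal (p_lde M l d \<epsilon> \<nu>))"

definition accumulation_state :: "'a stream measure \<Rightarrow> 'a stream measure \<Rightarrow> bool" where
  "accumulation_state M \<nu> \<longleftrightarrow> seq_prob \<nu> \<and>
     (\<forall>d::nat. d \<ge> 1 \<longrightarrow> (\<forall>\<epsilon>>0. p_de M d \<epsilon> \<nu> > 0))"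

definition p_nu :: "'a stream measure \<Rightarrow> 'a stream measure \<Rightarrow> real" where
  "p_nu M \<nu> = lim (\<lambda>d. Lim (at_right 0) (\<lambda>\<epsilon>. real_of_ereal (p_de M d \<epsilon> \<nu>)))"

definition Qplus :: "'a stream measure \<Rightarrow> 'a stream measure set" where
  "Qplus M = {\<nu>. accumulation_state M \<nu> \<and> p_nu M \<nu> > 0}"

fun word_prob :: "('q \<Rightarrow> 'a \<Rightarrow> 'q) \<Rightarrow> ('q \<Rightarrow> 'a \<Rightarrow> real) \<Rightarrow> 'q \<Rightarrow> 'a list \<Rightarrow> real" where
  "word_prob \<delta> \<pi>t q [] = 1"
| "word_prob \<delta> \<pi>t q (\<sigma> # x) = \<pi>t q \<sigma> * word_prob \<delta> \<pi>t (\<delta> q \<sigma>) x"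

definition trans_mat :: "('q \<Rightarrow> 'a::finite \<Rightarrow> 'q) \<Rightarrow> ('q \<Rightarrow> 'a \<Rightarrow> real) \<Rightarrow> 'q \<Rightarrow> 'q \<Rightarrow> real" where
  "trans_mat \<delta> \<pi>t q q' = (\<Sum>\<sigma>\<in>{\<sigma>. \<delta> q \<sigma> = q'}. \<pi>t q \<sigma>)"

definition stationary_dist :: "'q set \<Rightarrow> ('q \<Rightarrow> 'q \<Rightarrow> real) \<Rightarrow> ('q \<Rightarrow> real) \<Rightarrow> bool" where
  "stationary_dist Q P p \<longleftrightarrow> (\<forall>q\<in>Q. p q \<ge> 0) \<and> (\<Sum>q\<in>Q. p q) = 1 \<and>
     (\<forall>q'\<in>Q. (\<Sum>q\<in>Q. p q * P q q') = p q')"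

definition G_delta :: "'a stream measure \<Rightarrow> 'a \<Rightarrow> 'a stream measure" where
  "G_delta \<nu> \<sigma> = future \<nu> [\<sigma>]"

definition G_pit :: "'a stream measure \<Rightarrow> 'a \<Rightarrow> real" where
  "G_pit \<nu> \<sigma> = Pr \<nu> [\<sigma>]"

end

theory Submission
  imports Defs
begin


lemma space_SS: "space SS = UNIV"
  by (simp add: space_stream_space streams_UNIV)

lemma cyl_eq: "cyl x = {\<omega>. stake (length x) \<omega> = x}"
  by (simp add: cyl_def space_SS)

lemma stake_sstart: "(stake (length x) \<omega> = x) \<longleftrightarrow> \<omega> \<in> sstart UNIV x"
proof (induction x arbitrary: \<omega>)
  case Nil then show ?case by (simp add: streams_UNIV)
next
  case (Cons a x)
  then show ?case by (cases \<omega>) auto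
qed

lemma cyl_sstart: "cyl x = sstart UNIV x"
  using stake_sstart by (auto simp: cyl_eq)

lemma cyl_sets[measurable]: "cyl x \<in> sets SS"
  by (simp add: cyl_sstart sets_sstart)

lemma cyl_Nil: "cyl [] = UNIV"
  by (simp add: cyl_eq)

lemma cyl_append: "cyl (x @ y) = {\<omega>. \<omega> \<in> cyl x \<and> sdrop (length x) \<omega> \<in> cyl y}"
proof -
  have "stake (length (x @ y)) \<omega> = x @ y \<longleftrightarrow>
        stake (length x) \<omega> = x \<and> stake (length y) (sdrop (length x) \<omega>) = y" for \<omega> :: "'a stream"
  proof -
    have "stake (length (x @ y)) \<omega> = stake (length x) \<omega> @ stake (length y) (sdrop (length x) \<omega>)"
      by (simp only: length_append stake_add)
    then show ?thesis by (metis append_eq_append_conv length_stake)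
  qed
  then show ?thesis by (simp add: cyl_eq)
qed

lemma cyl_disj: "length x = length y \<Longrightarrow> x \<noteq> y \<Longrightarrow> cyl x \<inter> cyl y = {}"
  by (auto simp: cyl_eq)

lemma seq_probD: "seq_prob \<nu> \<Longrightarrow> prob_space \<nu>" "seq_prob \<nu> \<Longrightarrow> sets \<nu> = sets SS"
  by (auto simp: seq_prob_def)

lemma seq_prob_space: "seq_prob \<nu> \<Longrightarrow> space \<nu> = UNIV"
  using sets_eq_imp_space_eq[of \<nu> SS] by (simp add: seq_prob_def space_SS)

lemma Pr_nonneg: "Pr \<nu> x \<ge> 0"
  by (simp add: Pr_def)

lemma Pr_le1: "seq_prob \<nu> \<Longrightarrow> Pr \<nu> x \<le> 1"
  unfolding Pr_def using seq_probD(1) prob_space.prob_le_1 by metis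

lemma Pr_union:
  assumes "seq_prob \<nu>" "finite W" "\<And>w w'. w \<in> W \<Longrightarrow> w' \<in> W \<Longrightarrow> length w = length w'"
  shows "measure \<nu> (\<Union>w\<in>W. cyl w) = (\<Sum>w\<in>W. Pr \<nu> w)"
proof -
  have ps: "prob_space \<nu>" using assms(1) by (rule seq_probD)
  have se: "sets \<nu> = sets SS" using assms(1) by (rule seq_probD)
  have d: "disjoint_family_on cyl W"
    unfolding disjoint_family_on_def
  proof (intro ballI impI)
    fix m n assume "m \<in> W" "n \<in> W" "m \<noteq> n"
    then show "cyl m \<inter> cyl n = {}" using assms(3) cyl_disj by metis
  qed
  have s: "cyl ` W \<subseteq> sets \<nu>" unfolding se using cyl_sets by blast
  show ?thesis unfolding Pr_def
    using finite_measure.finite_measure_finite_Union[OF prob_space.finite_measure[OF ps] assms(2) s d] .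
qed

lemma words_finite: "finite {xs::('a::finite) list. length xs = n}"
  using finite_lists_length_eq[of "UNIV::'a set" n] by simp

lemma Pr_split:
  fixes x :: "('a::finite) list"
  assumes "seq_prob \<nu>"
  shows "Pr \<nu> x = (\<Sum>w\<in>{w. length w = n}. Pr \<nu> (x @ w))"
proof -
  have "cyl x = (\<Union>w\<in>(\<lambda>w. x @ w) ` {w. length w = n}. cyl w)"
  proof (rule set_eqI, rule iffI)
    fix \<omega> assume a: "\<omega> \<in> cyl x"
    define w where "w = stake n (sdrop (length x) \<omega>)"
    have "sdrop (length x) \<omega> \<in> cyl w" unfolding cyl_eq w_def by simp
    then have "\<omega> \<in> cyl (x @ w)" using a unfolding cyl_append by simp
    moreover have "x @ w \<in> (\<lambda>w. x @ w) ` {w. length w = n}" unfolding w_def by simp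
    ultimately show "\<omega> \<in> (\<Union>w\<in>(\<lambda>w. x @ w) ` {w. length w = n}. cyl w)" by blast
  next
    fix \<omega> assume "\<omega> \<in> (\<Union>w\<in>(\<lambda>w. x @ w) ` {w. length w = n}. cyl w)"
    then obtain w where "\<omega> \<in> cyl (x @ w)" by blast
    then show "\<omega> \<in> cyl x" unfolding cyl_append by simp
  qed
  then have "Pr \<nu> x = measure \<nu> (\<Union>w\<in>(\<lambda>w. x @ w) ` {w. length w = n}. cyl w)"
    by (simp add: Pr_def)
  also have "\<dots> = (\<Sum>w\<in>(\<lambda>w. x @ w) ` {w. length w = n}. Pr \<nu> w)"
    by (rule Pr_union[OF assms]) (simp add: words_finite, force)
  also have "\<dots> = (\<Sum>w\<in>{w. length w = n}. Pr \<nu> (x @ w))"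
    by (rule sum.reindex_cong[where l="\<lambda>w. x @ w"]) (simp_all add: inj_on_def)
  finally show ?thesis .
qed

lemma Pr_Nil: "seq_prob \<nu> \<Longrightarrow> Pr \<nu> [] = 1"
proof -
  assume a: "seq_prob \<nu>"
  have "Pr \<nu> [] = measure \<nu> (space \<nu>)" unfolding Pr_def cyl_Nil seq_prob_space[OF a] ..
  also have "\<dots> = 1" using seq_probD(1)[OF a] by (rule prob_space.prob_space)
  finally show ?thesis .
qed

lemma Pr_sum1:
  fixes \<nu> :: "('a::finite) stream measure"
  assumes "seq_prob \<nu>" shows "(\<Sum>w\<in>{w. length w = n}. Pr \<nu> w) = 1"
  using Pr_split[OF assms, of "[]" n] Pr_Nil[OF assms] by simp

lemma Pr_mono_prefix:
  fixes x :: "('a::finite) list"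
  assumes "seq_prob \<nu>" shows "Pr \<nu> (x @ y) \<le> Pr \<nu> x"
proof -
  have "Pr \<nu> (x @ y) \<le> (\<Sum>w\<in>{w. length w = length y}. Pr \<nu> (x @ w))"
    by (rule member_le_sum) (auto simp: Pr_nonneg words_finite)
  then show ?thesis using Pr_split[OF assms, of x "length y"] by simp
qed

lemma Pr_stationary:
  fixes M :: "('a::finite) stream measure"
  assumes "seq_prob M" "stationary_proc M"
  shows "Pr M x = (\<Sum>y\<in>{y. length y = l}. Pr M (y @ x))"
proof -
  have st: "distr M SS (sdrop l) = M" for l
  proof (induction l)
    case 0
    have "distr M SS (\<lambda>x. x) = M"
      using distr_id2[of SS M] seq_probD(2)[OF assms(1)] by simp
    moreover have "sdrop 0 = (\<lambda>x::'a stream. x)" by (rule ext) simp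
    ultimately show ?case by simp
  next
    case (Suc l)
    have m: "stl \<in> measurable M SS"
      unfolding measurable_cong_sets[OF seq_probD(2)[OF assms(1)] refl] by measurable
    have e: "sdrop (Suc l) = sdrop l \<circ> stl" by (rule ext) simp
    have "distr M SS (sdrop (Suc l)) = distr (distr M SS stl) SS (sdrop l)"
      unfolding e by (rule distr_distr[OF _ m, symmetric]) simp
    also have "\<dots> = M" using assms(2) Suc by (simp add: stationary_proc_def)
    finally show ?case .
  qed
  have m: "sdrop l \<in> measurable M SS"
    unfolding measurable_cong_sets[OF seq_probD(2)[OF assms(1)] refl] by measurable
  have "Pr M x = measure (distr M SS (sdrop l)) (cyl x)" using st[of l] by (simp add: Pr_def)
  also have "\<dots> = measure M (sdrop l -` cyl x)"
    using measure_distr[OF m, of "cyl x"] seq_prob_space[OF assms(1)] by simp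
  also have "sdrop l -` cyl x = (\<Union>w\<in>(\<lambda>y. y @ x) ` {y. length y = l}. cyl w)"
  proof (rule set_eqI, rule iffI)
    fix \<omega> assume a: "\<omega> \<in> sdrop l -` cyl x"
    define y where "y = stake l \<omega>"
    have "\<omega> \<in> cyl (y @ x)" using a unfolding cyl_append y_def by (simp add: cyl_eq)
    moreover have "y @ x \<in> (\<lambda>y. y @ x) ` {y. length y = l}" unfolding y_def by simp
    ultimately show "\<omega> \<in> (\<Union>w\<in>(\<lambda>y. y @ x) ` {y. length y = l}. cyl w)" by blast
  next
    fix \<omega> assume "\<omega> \<in> (\<Union>w\<in>(\<lambda>y. y @ x) ` {y. length y = l}. cyl w)"
    then obtain y where "\<omega> \<in> cyl (y @ x)" "length y = l" by blast
    then show "\<omega> \<in> sdrop l -` cyl x" unfolding cyl_append by simp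
  qed
  also have "measure M \<dots> = (\<Sum>w\<in>(\<lambda>y. y @ x) ` {y. length y = l}. Pr M w)"
    by (rule Pr_union[OF assms(1)]) (simp add: words_finite, force)
  also have "\<dots> = (\<Sum>y\<in>{y. length y = l}. Pr M (y @ x))"
    by (rule sum.reindex_cong[where l="\<lambda>y. y @ x"]) (simp_all add: inj_on_def)
  finally show ?thesis .
qed



lemma future_props:
  fixes M :: "('a::finite) stream measure"
  assumes M: "seq_prob M" and y: "Pr M y > 0"
  shows "seq_prob (future M y)" "Pr (future M y) x = Pr M (y @ x) / Pr M y"
proof -
  interpret P: prob_space M using M by (rule seq_probD)
  have se: "sets M = sets SS" using M by (rule seq_probD)
  have cs: "cyl y \<in> sets M" using se cyl_sets by simp
  have e1: "emeasure M (cyl y) \<noteq> 0" using y P.emeasure_eq_measure[of "cyl y"] by (simp add: Pr_def)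
  have e2: "emeasure M (cyl y) \<noteq> \<infinity>" using P.emeasure_eq_measure[of "cyl y"] by simp
  define U where "U = uniform_measure M (cyl y)"
  have pU: "prob_space U" unfolding U_def by (rule prob_space_uniform_measure[OF e1 e2])
  have sU: "sets U = sets SS" unfolding U_def using se by simp
  have spU: "space U = UNIV" using sets_eq_imp_space_eq[OF sU] by (simp add: space_SS)
  have m: "sdrop (length y) \<in> measurable U SS"
    unfolding measurable_cong_sets[OF sU refl] by measurable
  have fe: "future M y = distr U SS (sdrop (length y))" unfolding future_def U_def ..
  show "seq_prob (future M y)" unfolding seq_prob_def fe
    using prob_space.prob_space_distr[OF pU m] by simp
  have "Pr (future M y) x = measure U (sdrop (length y) -` cyl x)"
    unfolding Pr_def fe using measure_distr[OF m, of "cyl x"] spU by simp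
  also have "\<dots> = measure M (cyl y \<inter> sdrop (length y) -` cyl x) / measure M (cyl y)"
    unfolding U_def
  proof (rule measure_uniform_measure[OF e1 e2])
    have "sdrop (length y) -` cyl x = sdrop (length y) -` cyl x \<inter> space SS" by (simp add: space_SS)
    also have "\<dots> \<in> sets SS" by (rule measurable_sets[OF measurable_sdrop cyl_sets])
    finally show "sdrop (length y) -` cyl x \<in> sets M" using se by simp
  qed
  also have "cyl y \<inter> sdrop (length y) -` cyl x = cyl (y @ x)"
    unfolding cyl_append by auto
  finally show "Pr (future M y) x = Pr M (y @ x) / Pr M y" by (simp add: Pr_def)
qed

lemma word_prob_Pr:
  fixes \<nu> :: "('a::finite) stream measure"
  assumes "seq_prob \<nu>"
  shows "word_prob G_delta G_pit \<nu> x = Pr \<nu> x"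
  using assms
proof (induction x arbitrary: \<nu>)
  case Nil
  then show ?case by (simp add: Pr_Nil)
next
  case (Cons \<sigma> x)
  show ?case
  proof (cases "Pr \<nu> [\<sigma>] = 0")
    case True
    have "Pr \<nu> ([\<sigma>] @ x) \<le> Pr \<nu> [\<sigma>]" by (rule Pr_mono_prefix[OF Cons.prems])
    then have "Pr \<nu> (\<sigma> # x) = 0" using True Pr_nonneg[of \<nu> "\<sigma> # x"] by simp
    then show ?thesis using True by (simp add: G_pit_def)
  next
    case False
    then have pos: "Pr \<nu> [\<sigma>] > 0" using Pr_nonneg[of \<nu> "[\<sigma>]"] by simp
    have "word_prob G_delta G_pit \<nu> (\<sigma> # x) = Pr \<nu> [\<sigma>] * word_prob G_delta G_pit (future \<nu> [\<sigma>]) x"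
      by (simp add: G_pit_def G_delta_def)
    also have "word_prob G_delta G_pit (future \<nu> [\<sigma>]) x = Pr (future \<nu> [\<sigma>]) x"
      by (rule Cons.IH[OF future_props(1)[OF Cons.prems pos]])
    also have "\<dots> = Pr \<nu> ([\<sigma>] @ x) / Pr \<nu> [\<sigma>]"
      by (rule future_props(2)[OF Cons.prems pos])
    finally show ?thesis using pos by simp
  qed
qed

definition dd :: "nat \<Rightarrow> ('a::finite) stream measure \<Rightarrow> 'a stream measure \<Rightarrow> real" where
  "dd d \<mu> \<nu> = (\<Sum>x\<in>{xs::'a list. length xs = d}. \<bar>Pr \<mu> x - Pr \<nu> x\<bar>)"

lemma ball_de_iff: "\<nu>' \<in> ball_de d \<epsilon> \<nu> \<longleftrightarrow> seq_prob \<nu>' \<and> dd d \<nu>' \<nu> < \<epsilon>"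
  by (simp add: ball_de_def dd_def)

lemma words_sum:
  fixes f :: "('a::finite) list \<Rightarrow> real"
  shows "(\<Sum>x\<in>{x. length x = d}. \<Sum>w\<in>{w. length w = k}. f (x @ w)) = (\<Sum>z\<in>{z. length z = d + k}. f z)"
proof -
  have "(\<Sum>x\<in>{x. length x = d}. \<Sum>w\<in>{w. length w = k}. f (x @ w)) =
        (\<Sum>p\<in>Sigma {x. length x = d} (\<lambda>_. {w. length w = k}). f (fst p @ snd p))"
    by (simp add: sum.cartesian_product case_prod_beta)
  also have "\<dots> = (\<Sum>z\<in>{z. length z = d + k}. f z)"
    by (rule sum.reindex_bij_witness[where i="\<lambda>z. (take d z, drop d z)" and j="\<lambda>p. fst p @ snd p"])
       auto
  finally show ?thesis .
qed

lemma dd_nonneg: "dd d \<mu> \<nu> \<ge> 0"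
  unfolding dd_def by (rule sum_nonneg) simp

lemma dd_sym: "dd d \<mu> \<nu> = dd d \<nu> \<mu>"
  unfolding dd_def by (simp add: abs_minus_commute)

lemma dd_triangle: "dd d \<mu> \<nu> \<le> dd d \<rho> \<mu> + dd d \<rho> \<nu>"
  unfolding dd_def sum.distrib[symmetric] by (rule sum_mono) linarith

lemma dd_mono_add:
  fixes \<mu> :: "('a::finite) stream measure"
  assumes "seq_prob \<mu>" "seq_prob \<nu>"
  shows "dd d \<mu> \<nu> \<le> dd (d + k) \<mu> \<nu>"
proof -
  have "dd d \<mu> \<nu> = (\<Sum>x\<in>{x. length x = d}. \<bar>\<Sum>w\<in>{w. length w = k}. Pr \<mu> (x @ w) - Pr \<nu> (x @ w)\<bar>)"
    unfolding dd_def sum_subtractf Pr_split[OF assms(1), symmetric] Pr_split[OF assms(2), symmetric] ..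
  also have "\<dots> \<le> (\<Sum>x\<in>{x. length x = d}. \<Sum>w\<in>{w. length w = k}. \<bar>Pr \<mu> (x @ w) - Pr \<nu> (x @ w)\<bar>)"
    by (rule sum_mono) (rule sum_abs)
  also have "\<dots> = dd (d + k) \<mu> \<nu>"
    unfolding dd_def by (rule words_sum)
  finally show ?thesis .
qed

lemma dd_mono:
  fixes \<mu> :: "('a::finite) stream measure"
  assumes "seq_prob \<mu>" "seq_prob \<nu>" "d \<le> d'"
  shows "dd d \<mu> \<nu> \<le> dd d' \<mu> \<nu>"
  using dd_mono_add[OF assms(1,2), of d "d' - d"] assms(3) by simp

lemma dd_prefix:
  fixes \<mu> :: "('a::finite) stream measure"
  assumes "seq_prob \<mu>" "seq_prob \<nu>" "length x \<le> d"
  shows "\<bar>Pr \<mu> x - Pr \<nu> x\<bar> \<le> dd d \<mu> \<nu>"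
proof -
  have "\<bar>Pr \<mu> x - Pr \<nu> x\<bar> \<le> dd (length x) \<mu> \<nu>"
    unfolding dd_def by (rule member_le_sum) (simp_all add: words_finite)
  also have "\<dots> \<le> dd d \<mu> \<nu>" by (rule dd_mono[OF assms])
  finally show ?thesis .
qed

lemma measure_eq_Pr:
  fixes \<mu> :: "('a::finite) stream measure"
  assumes "seq_prob \<mu>" "seq_prob \<nu>" "\<And>x. Pr \<mu> x = Pr \<nu> x"
  shows "\<mu> = \<nu>"
proof (rule stream_space_eq_sstart[of UNIV])
  show "countable (UNIV :: 'a set)" by simp
  show "prob_space \<mu>" "prob_space \<nu>" using assms seq_probD by auto
  show "AE x in \<mu>. x \<in> streams UNIV" "AE x in \<nu>. x \<in> streams UNIV" by (simp_all add: streams_UNIV)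
  show "sets \<mu> = sets SS" "sets \<nu> = sets SS" using assms seq_probD by auto
  fix xs :: "'a list"
  have "emeasure \<mu> (cyl xs) = emeasure \<nu> (cyl xs)"
    using assms(3)[of xs] finite_measure.emeasure_eq_measure[OF prob_space.finite_measure[OF seq_probD(1)[OF assms(1)]]]
      finite_measure.emeasure_eq_measure[OF prob_space.finite_measure[OF seq_probD(1)[OF assms(2)]]]
    by (simp add: Pr_def)
  then show "emeasure \<mu> (sstart UNIV xs) = emeasure \<nu> (sstart UNIV xs)" by (simp add: cyl_sstart)
qed

lemma separate:
  fixes \<mu> :: "('a::finite) stream measure"
  assumes "seq_prob \<mu>" "seq_prob \<nu>" "\<mu> \<noteq> \<nu>"
  shows "\<exists>d. dd d \<mu> \<nu> > 0"
proof (rule ccontr)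
  assume "\<not> ?thesis"
  then have "\<not> dd d \<mu> \<nu> > 0" for d by blast
  then have z: "dd d \<mu> \<nu> = 0" for d using dd_nonneg[of d \<mu> \<nu>] by (meson antisym not_le)
  have "Pr \<mu> x = Pr \<nu> x" for x
    using dd_prefix[OF assms(1,2), of x "length x"] z[of "length x"] by simp
  then have "\<mu> = \<nu>" by (rule measure_eq_Pr[OF assms(1,2)])
  then show False using assms(3) by simp
qed



definition idx :: "'a stream measure \<Rightarrow> nat \<Rightarrow> nat \<Rightarrow> real \<Rightarrow> 'a stream measure \<Rightarrow> 'a list set" where
  "idx M l d \<epsilon> \<nu> = {xs. length xs = l \<and> Pr M xs > 0 \<and> future M xs \<in> ball_de d \<epsilon> \<nu>}"

lemma p_lde_idx: "p_lde M l d \<epsilon> \<nu> = (\<Sum>x\<in>idx M l d \<epsilon> \<nu>. Pr M x)"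
  unfolding p_lde_def idx_def ..

lemma idx_finite:
  fixes M :: "('a::finite) stream measure"
  shows "finite (idx M l d \<epsilon> \<nu>)"
  by (rule finite_subset[OF _ words_finite[of l]]) (auto simp: idx_def)

lemma p_lde_nonneg: "p_lde M l d \<epsilon> \<nu> \<ge> 0"
  unfolding p_lde_idx by (rule sum_nonneg) (simp add: Pr_nonneg)

lemma p_lde_le1:
  fixes M :: "('a::finite) stream measure"
  assumes "seq_prob M" shows "p_lde M l d \<epsilon> \<nu> \<le> 1"
proof -
  have "p_lde M l d \<epsilon> \<nu> \<le> (\<Sum>x\<in>{x. length x = l}. Pr M x)"
    unfolding p_lde_idx by (rule sum_mono2) (auto simp: words_finite idx_def Pr_nonneg)
  then show ?thesis using Pr_sum1[OF assms, of l] by simp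
qed

lemma p_lde_mono_eps:
  fixes M :: "('a::finite) stream measure"
  assumes "\<epsilon> \<le> \<epsilon>'" shows "p_lde M l d \<epsilon> \<nu> \<le> p_lde M l d \<epsilon>' \<nu>"
  unfolding p_lde_idx
  by (rule sum_mono2[OF idx_finite]) (use assms in \<open>auto simp: idx_def ball_de_iff Pr_nonneg\<close>)

lemma p_lde_mono_d:
  fixes \<nu> :: "('a::finite) stream measure"
  assumes "seq_prob \<nu>" "d \<le> d'" shows "p_lde M l d' \<epsilon> \<nu> \<le> p_lde M l d \<epsilon> \<nu>"
  unfolding p_lde_idx
proof (rule sum_mono2)
  show "idx M l d' \<epsilon> \<nu> \<subseteq> idx M l d \<epsilon> \<nu>"
  proof
    fix x assume "x \<in> idx M l d' \<epsilon> \<nu>"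
    then have "length x = l" "Pr M x > 0" "seq_prob (future M x)" "dd d' (future M x) \<nu> < \<epsilon>"
      by (auto simp: idx_def ball_de_iff)
    moreover have "dd d (future M x) \<nu> \<le> dd d' (future M x) \<nu>"
      by (rule dd_mono[OF \<open>seq_prob (future M x)\<close> assms])
    ultimately show "x \<in> idx M l d \<epsilon> \<nu>" by (auto simp: idx_def ball_de_iff)
  qed
qed (auto simp: idx_finite Pr_nonneg)

lemma p_de_bounds:
  fixes M :: "('a::finite) stream measure"
  assumes "seq_prob M" shows "0 \<le> p_de M d \<epsilon> \<nu>" "p_de M d \<epsilon> \<nu> \<le> 1"
proof -
  show "0 \<le> p_de M d \<epsilon> \<nu>" unfolding p_de_def
    by (rule Liminf_bounded) (simp add: p_lde_nonneg)
  have "p_de M d \<epsilon> \<nu> \<le> liminf (\<lambda>l. (1::ereal))" unfolding p_de_def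
    by (rule Liminf_mono) (simp add: p_lde_le1[OF assms])
  then show "p_de M d \<epsilon> \<nu> \<le> 1" by (simp add: Liminf_const)
qed

definition fde :: "('a::finite) stream measure \<Rightarrow> nat \<Rightarrow> real \<Rightarrow> 'a stream measure \<Rightarrow> real" where
  "fde M d \<epsilon> \<nu> = real_of_ereal (p_de M d \<epsilon> \<nu>)"

lemma fde_ereal:
  fixes M :: "('a::finite) stream measure"
  assumes "seq_prob M" shows "ereal (fde M d \<epsilon> \<nu>) = p_de M d \<epsilon> \<nu>"
  using p_de_bounds[OF assms, of d \<epsilon> \<nu>] unfolding fde_def
  by (cases "p_de M d \<epsilon> \<nu>") auto

lemma fde_bounds:
  fixes M :: "('a::finite) stream measure"
  assumes "seq_prob M" shows "0 \<le> fde M d \<epsilon> \<nu>" "fde M d \<epsilon> \<nu> \<le> 1"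
proof -
  show "0 \<le> fde M d \<epsilon> \<nu>" unfolding fde_def by (rule real_of_ereal_pos[OF p_de_bounds(1)[OF assms]])
  have "fde M d \<epsilon> \<nu> \<le> real_of_ereal 1" unfolding fde_def
    by (rule real_of_ereal_positive_mono[OF p_de_bounds(1)[OF assms] p_de_bounds(2)[OF assms]]) simp
  then show "fde M d \<epsilon> \<nu> \<le> 1" by simp
qed

lemma fde_mono_gen:
  fixes M :: "('a::finite) stream measure"
  assumes "seq_prob M" "\<And>l. p_lde M l d \<epsilon> \<nu> \<le> p_lde M l d' \<epsilon>' \<nu>"
  shows "fde M d \<epsilon> \<nu> \<le> fde M d' \<epsilon>' \<nu>"
proof -
  have "p_de M d \<epsilon> \<nu> \<le> p_de M d' \<epsilon>' \<nu>" unfolding p_de_def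
    by (rule Liminf_mono) (simp add: assms(2))
  then show ?thesis using fde_ereal[OF assms(1)] by (metis ereal_less_eq(3))
qed

lemma fde_mono:
  fixes M :: "('a::finite) stream measure"
  assumes "seq_prob M" "seq_prob \<nu>" "d \<le> d'" "\<epsilon>' \<le> \<epsilon>"
  shows "fde M d' \<epsilon>' \<nu> \<le> fde M d \<epsilon> \<nu>"
  by (rule fde_mono_gen[OF assms(1)])
     (rule order_trans[OF p_lde_mono_d[OF assms(2,3)] p_lde_mono_eps[OF assms(4)]])

lemma p_nu_char:
  fixes M :: "('a::finite) stream measure"
  assumes M: "seq_prob M" and \<nu>: "seq_prob \<nu>"
  shows "\<And>d \<epsilon>. \<epsilon> > 0 \<Longrightarrow> p_nu M \<nu> \<le> fde M d \<epsilon> \<nu>"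
    and "\<And>D c. (\<And>d. d \<ge> D \<Longrightarrow> \<exists>e0>0. \<forall>\<epsilon>. 0 < \<epsilon> \<longrightarrow> \<epsilon> < e0 \<longrightarrow> c \<le> fde M d \<epsilon> \<nu>)
        \<Longrightarrow> c \<le> p_nu M \<nu>"
proof -
  define f where "f d \<epsilon> = fde M d \<epsilon> \<nu>" for d \<epsilon>
  define g where "g d = Inf (f d ` {0<..})" for d
  have f0: "0 \<le> f d \<epsilon>" for d \<epsilon> unfolding f_def by (rule fde_bounds[OF M])
  have fmono: "f d' \<epsilon>' \<le> f d \<epsilon>" if "d \<le> d'" "\<epsilon>' \<le> \<epsilon>" for d d' \<epsilon> \<epsilon>'
    unfolding f_def by (rule fde_mono[OF M \<nu> that])
  have bdd: "bdd_below (f d ` {0<..})" for d by (rule bdd_belowI[where m=0]) (auto simp: f0)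
  have ne: "f d ` {0<..} \<noteq> {}" for d by auto
  have gle: "g d \<le> f d \<epsilon>" if "\<epsilon> > 0" for d \<epsilon>
    unfolding g_def by (rule cInf_lower[OF _ bdd]) (use that in auto)
  have g0: "0 \<le> g d" for d unfolding g_def by (rule cInf_greatest[OF ne]) (auto simp: f0)
  have tl: "(f d \<longlongrightarrow> g d) (at_right 0)" for d
  proof (rule order_tendstoI)
    fix a assume "a < g d"
    then show "eventually (\<lambda>\<epsilon>. a < f d \<epsilon>) (at_right 0)"
      unfolding eventually_at_right_field
      by (intro exI[of _ 1]) (auto intro: less_le_trans[OF _ gle])
  next
    fix a assume "g d < a"
    then obtain \<epsilon>0 where e0: "\<epsilon>0 > 0" "f d \<epsilon>0 < a"
      unfolding g_def cInf_less_iff[OF ne bdd] by auto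
    show "eventually (\<lambda>\<epsilon>. f d \<epsilon> < a) (at_right 0)"
      unfolding eventually_at_right_field
      by (intro exI[of _ \<epsilon>0]) (auto intro: le_less_trans[OF fmono e0(2)] simp: e0(1))
  qed
  have Lg: "Lim (at_right 0) (\<lambda>\<epsilon>. real_of_ereal (p_de M d \<epsilon> \<nu>)) = g d" for d
    using tendsto_Lim[OF trivial_limit_at_right_real tl[of d]] unfolding f_def fde_def .
  have gdec: "decseq g"
  proof (rule decseq_SucI)
    fix d show "g (Suc d) \<le> g d"
      unfolding g_def[of d] by (rule cInf_greatest[OF ne]) (auto intro: order_trans[OF gle fmono])
  qed
  have gbdd: "bdd_below (range g)" by (rule bdd_belowI[where m=0]) (auto simp: g0)
  have pn: "p_nu M \<nu> = (INF d. g d)"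
    unfolding p_nu_def Lg by (rule limI[OF LIMSEQ_decseq_INF[OF gbdd gdec]])
  show "p_nu M \<nu> \<le> fde M d \<epsilon> \<nu>" if "\<epsilon> > 0" for d \<epsilon>
  proof -
    have "p_nu M \<nu> \<le> g d" unfolding pn by (rule cINF_lower[OF gbdd]) simp
    also have "\<dots> \<le> f d \<epsilon>" by (rule gle[OF that])
    finally show ?thesis unfolding f_def .
  qed
  show "c \<le> p_nu M \<nu>" if H: "\<And>d. d \<ge> D \<Longrightarrow> \<exists>e0>0. \<forall>\<epsilon>. 0 < \<epsilon> \<longrightarrow> \<epsilon> < e0 \<longrightarrow> c \<le> fde M d \<epsilon> \<nu>" for D c
  proof -
    have "c \<le> g d" for d
      unfolding g_def
    proof (rule cInf_greatest[OF ne])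
      fix y assume "y \<in> f d ` {0<..}"
      then obtain \<epsilon> where e: "\<epsilon> > 0" "y = f d \<epsilon>" by auto
      obtain e0 where e0: "e0 > 0" "\<forall>\<epsilon>. 0 < \<epsilon> \<longrightarrow> \<epsilon> < e0 \<longrightarrow> c \<le> fde M (max d D) \<epsilon> \<nu>"
        using H[of "max d D"] by auto
      have "c \<le> f (max d D) (min \<epsilon> (e0/2))" unfolding f_def using e0 e(1) by auto
      also have "\<dots> \<le> f d \<epsilon>" by (rule fmono) auto
      finally show "c \<le> y" using e(2) by simp
    qed
    then show ?thesis unfolding pn by (intro cINF_greatest) auto
  qed
qed

lemma liminf_lower:
  fixes a :: "nat \<Rightarrow> real" and b :: "'i \<Rightarrow> nat \<Rightarrow> real"
  assumes I: "finite I" and c: "\<And>i. i \<in> I \<Longrightarrow> c i \<ge> 0"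
    and r: "\<And>i. i \<in> I \<Longrightarrow> ereal (r i) \<le> liminf (\<lambda>l. ereal (b i l))"
    and ab: "\<And>l. (\<Sum>i\<in>I. c i * b i l) \<le> a (Suc l)"
  shows "ereal (\<Sum>i\<in>I. c i * r i) \<le> liminf (\<lambda>l. ereal (a l))"
  unfolding le_Liminf_iff
proof (intro allI impI)
  fix y assume y: "y < ereal (\<Sum>i\<in>I. c i * r i)"
  define S where "S = (\<Sum>i\<in>I. c i * r i)"
  show "eventually (\<lambda>l. y < ereal (a l)) sequentially"
  proof (cases y)
    case (real t)
    then have tS: "t < S" using y S_def by simp
    define C where "C = (\<Sum>i\<in>I. c i) + 1"
    have C1: "C \<ge> 1" unfolding C_def using sum_nonneg[of I c] c by force
    define \<eta> where "\<eta> = (S - t) / C"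
    have \<eta>: "\<eta> > 0" unfolding \<eta>_def using tS C1 by simp
    have "\<forall>i\<in>I. eventually (\<lambda>l. ereal (r i - \<eta>) < ereal (b i l)) sequentially"
    proof
      fix i assume "i \<in> I"
      have "ereal (r i - \<eta>) < ereal (r i)" using \<eta> by simp
      also have "\<dots> \<le> liminf (\<lambda>l. ereal (b i l))" by (rule r[OF \<open>i \<in> I\<close>])
      finally show "eventually (\<lambda>l. ereal (r i - \<eta>) < ereal (b i l)) sequentially"
        by (rule less_LiminfD)
    qed
    then have ev: "eventually (\<lambda>l. \<forall>i\<in>I. r i - \<eta> < b i l) sequentially"
      by (intro eventually_ball_finite[OF I]) simp
    have "eventually (\<lambda>l. t < a (Suc l)) sequentially"
      using ev
    proof eventually_elim
      case (elim l)
      have "(\<Sum>i\<in>I. c i * (r i - \<eta>)) \<le> (\<Sum>i\<in>I. c i * b i l)"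
      proof (rule sum_mono)
        fix i assume "i \<in> I"
        then show "c i * (r i - \<eta>) \<le> c i * b i l" using elim c[of i]
          by (intro mult_left_mono) auto
      qed
      also have "\<dots> \<le> a (Suc l)" by (rule ab)
      finally have 1: "(\<Sum>i\<in>I. c i * (r i - \<eta>)) \<le> a (Suc l)" .
      have "(\<Sum>i\<in>I. c i * (r i - \<eta>)) = S - \<eta> * (C - 1)"
        unfolding S_def C_def by (simp add: algebra_simps sum_subtractf sum_distrib_left)
      moreover have "\<eta> * C = S - t" unfolding \<eta>_def using C1 by simp
      ultimately have "(\<Sum>i\<in>I. c i * (r i - \<eta>)) = t + \<eta>" by (simp add: algebra_simps)
      then show "t < a (Suc l)" using 1 \<eta> by linarith
    qed
    then have "eventually (\<lambda>l. t < a l) sequentially"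
      by (rule eventually_sequentially_Suc[of "\<lambda>l. t < a l", THEN iffD1])
    then show ?thesis unfolding real by simp
  next
    case PInf then show ?thesis using y by simp
  next
    case MInf then show ?thesis by simp
  qed
qed



lemma sum_Cons_le:
  fixes f :: "('a::finite) list \<Rightarrow> real"
  assumes "\<And>z. f z \<ge> 0"
  shows "(\<Sum>w\<in>{w. length w = d}. f (\<sigma> # w)) \<le> (\<Sum>z\<in>{z. length z = Suc d}. f z)"
proof -
  have "(\<Sum>w\<in>{w. length w = d}. f (\<sigma> # w)) = (\<Sum>z\<in>(\<lambda>w. \<sigma> # w) ` {w. length w = d}. f z)"
    by (subst sum.reindex) (simp_all add: inj_on_def)
  also have "\<dots> \<le> (\<Sum>z\<in>{z. length z = Suc d}. f z)"
    by (rule sum_mono2[OF words_finite]) (auto simp: assms)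
  finally show ?thesis .
qed

lemma step_lemma:
  fixes M :: "('a::finite) stream measure"
  assumes M: "seq_prob M" and \<nu>: "seq_prob \<nu>" and b: "Pr \<nu> [\<sigma>] > 0"
    and y: "y \<in> idx M l (Suc d) \<epsilon>' \<nu>"
    and e1: "\<epsilon>' \<le> Pr \<nu> [\<sigma>] / 2" and e2: "4 * \<epsilon>' \<le> \<epsilon> * Pr \<nu> [\<sigma>]"
  shows "y @ [\<sigma>] \<in> idx M (Suc l) d \<epsilon> (future \<nu> [\<sigma>])"
    and "Pr M (y @ [\<sigma>]) \<ge> (Pr \<nu> [\<sigma>] - \<epsilon>') * Pr M y"
proof -
  define bb where "bb = Pr \<nu> [\<sigma>]"
  have yl: "length y = l" and py: "Pr M y > 0" and mu: "seq_prob (future M y)"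
    and dmu: "dd (Suc d) (future M y) \<nu> < \<epsilon>'"
    using y by (auto simp: idx_def ball_de_iff)
  define \<mu> where "\<mu> = future M y"
  define a where "a = Pr \<mu> [\<sigma>]"
  have "\<bar>a - bb\<bar> \<le> dd (Suc d) \<mu> \<nu>"
    unfolding a_def bb_def \<mu>_def by (rule dd_prefix[OF mu \<nu>]) simp
  then have ab: "\<bar>a - bb\<bar> < \<epsilon>'" using dmu \<mu>_def by simp
  have bpos: "bb > 0" using b bb_def by simp
  have ahalf: "a \<ge> bb / 2" using ab e1 bb_def by linarith
  have apos: "a > 0" using ahalf bpos by simp
  have pya: "Pr M (y @ [\<sigma>]) = a * Pr M y"
    using future_props(2)[OF M py, of "[\<sigma>]"] py unfolding a_def \<mu>_def by simp
  show "Pr M (y @ [\<sigma>]) \<ge> (Pr \<nu> [\<sigma>] - \<epsilon>') * Pr M y"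
    unfolding pya using ab py bb_def by (intro mult_right_mono) auto
  have pys: "Pr M (y @ [\<sigma>]) > 0" unfolding pya using apos py by simp
  have sf: "seq_prob (future M (y @ [\<sigma>]))" by (rule future_props(1)[OF M pys])
  have sfn: "seq_prob (future \<nu> [\<sigma>])" by (rule future_props(1)[OF \<nu> b])
  have F1: "Pr (future M (y @ [\<sigma>])) w = Pr \<mu> (\<sigma> # w) / a" for w
  proof -
    have "Pr (future M (y @ [\<sigma>])) w = Pr M (y @ [\<sigma>] @ w) / Pr M (y @ [\<sigma>])"
      using future_props(2)[OF M pys, of w] by simp
    also have "Pr M (y @ [\<sigma>] @ w) = Pr \<mu> (\<sigma> # w) * Pr M y"
      using future_props(2)[OF M py, of "[\<sigma>] @ w"] py unfolding \<mu>_def by simp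
    finally show ?thesis unfolding pya using py by simp
  qed
  have F2: "Pr (future \<nu> [\<sigma>]) w = Pr \<nu> (\<sigma> # w) / bb" for w
    using future_props(2)[OF \<nu> b, of w] unfolding bb_def by simp
  have S1: "(\<Sum>w\<in>{w. length w = d}. \<bar>Pr \<mu> (\<sigma> # w) - Pr \<nu> (\<sigma> # w)\<bar>) \<le> dd (Suc d) \<mu> \<nu>"
    unfolding dd_def by (rule sum_Cons_le) simp
  have S2: "(\<Sum>w\<in>{w. length w = d}. Pr \<nu> (\<sigma> # w)) = bb"
    using Pr_split[OF \<nu>, of "[\<sigma>]" d] unfolding bb_def by simp
  have "dd d (future M (y @ [\<sigma>])) (future \<nu> [\<sigma>]) =
        (\<Sum>w\<in>{w. length w = d}. \<bar>Pr \<mu> (\<sigma> # w) / a - Pr \<nu> (\<sigma> # w) / bb\<bar>)"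
    unfolding dd_def F1 F2 ..
  also have "\<dots> \<le> (\<Sum>w\<in>{w. length w = d}. \<bar>Pr \<mu> (\<sigma> # w) - Pr \<nu> (\<sigma> # w)\<bar> / a
                     + Pr \<nu> (\<sigma> # w) * (\<bar>bb - a\<bar> / (a * bb)))"
  proof (rule sum_mono)
    fix w
    define A where "A = Pr \<mu> (\<sigma> # w)"
    define B where "B = Pr \<nu> (\<sigma> # w)"
    have B0: "B \<ge> 0" unfolding B_def by (rule Pr_nonneg)
    have eq: "A / a - B / bb = (A - B) / a + B * ((bb - a) / (a * bb))"
      using apos bpos by (simp add: field_simps)
    have "\<bar>A / a - B / bb\<bar> \<le> \<bar>(A - B) / a\<bar> + \<bar>B * ((bb - a) / (a * bb))\<bar>"
      unfolding eq by (rule abs_triangle_ineq)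
    also have "\<dots> = \<bar>A - B\<bar> / a + B * (\<bar>bb - a\<bar> / (a * bb))"
      using apos bpos B0 by (simp add: abs_mult abs_divide)
    finally show "\<bar>Pr \<mu> (\<sigma> # w) / a - Pr \<nu> (\<sigma> # w) / bb\<bar> \<le> \<bar>Pr \<mu> (\<sigma> # w) - Pr \<nu> (\<sigma> # w)\<bar> / a
                     + Pr \<nu> (\<sigma> # w) * (\<bar>bb - a\<bar> / (a * bb))" unfolding A_def B_def .
  qed
  also have "\<dots> = (\<Sum>w\<in>{w. length w = d}. \<bar>Pr \<mu> (\<sigma> # w) - Pr \<nu> (\<sigma> # w)\<bar>) / a
                  + bb * (\<bar>bb - a\<bar> / (a * bb))"
    unfolding sum.distrib sum_divide_distrib[symmetric] sum_distrib_right[symmetric] S2 ..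
  also have "\<dots> = (\<Sum>w\<in>{w. length w = d}. \<bar>Pr \<mu> (\<sigma> # w) - Pr \<nu> (\<sigma> # w)\<bar>) / a + \<bar>bb - a\<bar> / a"
    using bpos by simp
  also have "\<dots> < \<epsilon>' / a + \<epsilon>' / a"
  proof (rule add_less_le_mono)
    show "(\<Sum>w\<in>{w. length w = d}. \<bar>Pr \<mu> (\<sigma> # w) - Pr \<nu> (\<sigma> # w)\<bar>) / a < \<epsilon>' / a"
      using S1 dmu apos unfolding \<mu>_def by (intro divide_strict_right_mono) auto
    show "\<bar>bb - a\<bar> / a \<le> \<epsilon>' / a"
      using ab apos by (intro divide_right_mono) auto
  qed
  also have "\<dots> \<le> \<epsilon>"
  proof -
    have "2 * \<epsilon>' \<le> \<epsilon> * a"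
    proof -
      have "\<epsilon> \<ge> 0"
      proof (rule ccontr)
        assume "\<not> \<epsilon> \<ge> 0"
        then have "\<epsilon> * bb < 0" using bpos by (simp add: mult_neg_pos)
        moreover have "\<epsilon>' \<ge> 0" using ab by simp
        ultimately show False using e2 bb_def by simp
      qed
      then have "\<epsilon> * (bb / 2) \<le> \<epsilon> * a" using ahalf by (rule mult_left_mono[rotated])
      then show ?thesis using e2 bb_def by simp
    qed
    then show ?thesis using apos by (simp add: field_simps)
  qed
  finally have "dd d (future M (y @ [\<sigma>])) (future \<nu> [\<sigma>]) < \<epsilon>" .
  then show "y @ [\<sigma>] \<in> idx M (Suc l) d \<epsilon> (future \<nu> [\<sigma>])"
    using yl pys sf by (simp add: idx_def ball_de_iff)
qed



lemma push_bound:
  fixes M :: "('a::finite) stream measure"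
  assumes M: "seq_prob M" and fin: "finite S"
    and hS: "\<And>p. p \<in> S \<Longrightarrow> seq_prob (fst p) \<and> Pr (fst p) [snd p] > 0 \<and> future (fst p) [snd p] = \<nu>'
                 \<and> \<epsilon>' \<le> Pr (fst p) [snd p] / 2 \<and> 4 * \<epsilon>' \<le> \<epsilon> * Pr (fst p) [snd p]"
    and disj: "\<And>p q. p \<in> S \<Longrightarrow> q \<in> S \<Longrightarrow> fst p \<noteq> fst q \<Longrightarrow>
                 idx M l (Suc d) \<epsilon>' (fst p) \<inter> idx M l (Suc d) \<epsilon>' (fst q) = {}"
  shows "(\<Sum>p\<in>S. (Pr (fst p) [snd p] - \<epsilon>') * p_lde M l (Suc d) \<epsilon>' (fst p)) \<le> p_lde M (Suc l) d \<epsilon> \<nu>'"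
proof -
  define B where "B p = idx M l (Suc d) \<epsilon>' (fst p)" for p :: "'a stream measure \<times> 'a"
  define h where "h q = snd q @ [snd (fst q)]" for q :: "('a stream measure \<times> 'a) \<times> 'a list"
  have finB: "finite (B p)" for p unfolding B_def by (rule idx_finite)
  have "(\<Sum>p\<in>S. (Pr (fst p) [snd p] - \<epsilon>') * p_lde M l (Suc d) \<epsilon>' (fst p))
      = (\<Sum>p\<in>S. \<Sum>y\<in>B p. (Pr (fst p) [snd p] - \<epsilon>') * Pr M y)"
    unfolding p_lde_idx B_def sum_distrib_left ..
  also have "\<dots> \<le> (\<Sum>p\<in>S. \<Sum>y\<in>B p. Pr M (y @ [snd p]))"
  proof (intro sum_mono)
    fix p y assume p: "p \<in> S" and y: "y \<in> B p"
    show "(Pr (fst p) [snd p] - \<epsilon>') * Pr M y \<le> Pr M (y @ [snd p])"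
      using step_lemma(2)[OF M _ _ y[unfolded B_def]] hS[OF p] by auto
  qed
  also have "\<dots> = (\<Sum>q\<in>Sigma S B. Pr M (h q))"
    unfolding h_def by (subst sum.Sigma[OF fin]) (auto simp: finB split_def)
  also have "\<dots> = (\<Sum>z\<in>h ` Sigma S B. Pr M z)"
  proof -
    have inj: "inj_on h (Sigma S B)"
    proof (rule inj_onI)
      fix q1 q2 assume q1: "q1 \<in> Sigma S B" and q2: "q2 \<in> Sigma S B" and e: "h q1 = h q2"
      obtain p1 y1 p2 y2 where qq: "q1 = (p1, y1)" "q2 = (p2, y2)" by fastforce
      have yy: "y1 = y2" and ss: "snd p1 = snd p2" using e unfolding h_def qq by auto
      have "fst p1 = fst p2"
      proof (rule ccontr)
        assume "fst p1 \<noteq> fst p2"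
        then have "B p1 \<inter> B p2 = {}" unfolding B_def using disj q1 q2 qq by auto
        then show False using q1 q2 qq yy by auto
      qed
      then show "q1 = q2" using qq yy ss by (simp add: prod_eq_iff)
    qed
    show ?thesis by (simp add: sum.reindex[OF inj])
  qed
  also have "\<dots> \<le> (\<Sum>z\<in>idx M (Suc l) d \<epsilon> \<nu>'. Pr M z)"
  proof (rule sum_mono2[OF idx_finite])
    show "h ` Sigma S B \<subseteq> idx M (Suc l) d \<epsilon> \<nu>'"
    proof
      fix z assume "z \<in> h ` Sigma S B"
      then obtain p y where p: "p \<in> S" and y: "y \<in> B p" and z: "z = y @ [snd p]"
        unfolding h_def by auto
      have "y @ [snd p] \<in> idx M (Suc l) d \<epsilon> (future (fst p) [snd p])"
        using step_lemma(1)[OF M _ _ y[unfolded B_def]] hS[OF p] by auto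
      then show "z \<in> idx M (Suc l) d \<epsilon> \<nu>'" using hS[OF p] z by simp
    qed
  qed (simp add: Pr_nonneg)
  finally show ?thesis unfolding p_lde_idx .
qed

lemma ball_disj:
  fixes \<mu> :: "('a::finite) stream measure"
  assumes "dd d \<nu>1 \<nu>2 \<ge> \<delta>" "2 * \<epsilon>' \<le> \<delta>"
  shows "idx M l d \<epsilon>' \<nu>1 \<inter> idx M l d \<epsilon>' \<nu>2 = {}"
proof (rule ccontr)
  assume "\<not> ?thesis"
  then obtain y where "y \<in> idx M l d \<epsilon>' \<nu>1" "y \<in> idx M l d \<epsilon>' \<nu>2" by auto
  then have "dd d (future M y) \<nu>1 < \<epsilon>'" "dd d (future M y) \<nu>2 < \<epsilon>'"
    by (auto simp: idx_def ball_de_iff)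
  moreover have "dd d \<nu>1 \<nu>2 \<le> dd d (future M y) \<nu>1 + dd d (future M y) \<nu>2" by (rule dd_triangle)
  ultimately show False using assms by linarith
qed

lemma main_lb:
  fixes M :: "('a::finite) stream measure"
  assumes M: "seq_prob M" and fin: "finite S" and \<nu>': "seq_prob \<nu>'"
    and hS: "\<And>p. p \<in> S \<Longrightarrow> seq_prob (fst p) \<and> Pr (fst p) [snd p] > 0 \<and> future (fst p) [snd p] = \<nu>'"
    and \<delta>: "\<delta> > 0"
    and sep: "\<And>p q d. p \<in> S \<Longrightarrow> q \<in> S \<Longrightarrow> fst p \<noteq> fst q \<Longrightarrow> d \<ge> D \<Longrightarrow> dd d (fst p) (fst q) \<ge> \<delta>"
  shows "\<And>d \<epsilon>. \<epsilon> > 0 \<Longrightarrow> (\<Sum>p\<in>S. Pr (fst p) [snd p] * p_nu M (fst p)) \<le> fde M d \<epsilon> \<nu>'"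
    and "(\<Sum>p\<in>S. Pr (fst p) [snd p] * p_nu M (fst p)) \<le> p_nu M \<nu>'"
proof -
  define c where "c = (\<Sum>p\<in>S. Pr (fst p) [snd p] * p_nu M (fst p))"
  define K where "K = (\<Sum>p\<in>S. \<bar>p_nu M (fst p)\<bar>)"
  have K0: "K \<ge> 0" unfolding K_def by (rule sum_nonneg) simp
  define bmin where "bmin = Min (insert 1 ((\<lambda>p. Pr (fst p) [snd p]) ` S))"
  have bmin: "bmin > 0" unfolding bmin_def using fin hS by (subst Min_gr_iff) auto
  have bminle: "bmin \<le> Pr (fst p) [snd p]" if "p \<in> S" for p
    unfolding bmin_def using fin that by (intro Min_le) auto
  have claim1: "c \<le> fde M d \<epsilon> \<nu>'" if d: "d \<ge> D" and e: "\<epsilon> > 0" for d \<epsilon>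
  proof -
    define e0 where "e0 = min (\<delta>/2) (min (bmin/2) (\<epsilon> * bmin / 4))"
    have e0: "e0 > 0" unfolding e0_def using \<delta> bmin e by simp
    have lb: "c - \<epsilon>' * K \<le> fde M d \<epsilon> \<nu>'" if e': "0 < \<epsilon>'" "\<epsilon>' \<le> e0" for \<epsilon>'
    proof -
      have hS': "seq_prob (fst p) \<and> Pr (fst p) [snd p] > 0 \<and> future (fst p) [snd p] = \<nu>'
                 \<and> \<epsilon>' \<le> Pr (fst p) [snd p] / 2 \<and> 4 * \<epsilon>' \<le> \<epsilon> * Pr (fst p) [snd p]" if p: "p \<in> S" for p
      proof -
        have "\<epsilon>' \<le> bmin / 2" "4 * \<epsilon>' \<le> \<epsilon> * bmin" using e' unfolding e0_def by auto
        moreover have "\<epsilon> * bmin \<le> \<epsilon> * Pr (fst p) [snd p]" using bminle[OF p] e by simp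
        ultimately show ?thesis using hS[OF p] bminle[OF p] by auto
      qed
      have disj: "idx M l (Suc d) \<epsilon>' (fst p) \<inter> idx M l (Suc d) \<epsilon>' (fst q) = {}"
        if "p \<in> S" "q \<in> S" "fst p \<noteq> fst q" for p q l
        by (rule ball_disj[OF sep[OF that]]) (use d e' in \<open>auto simp: e0_def\<close>)
      have ab: "(\<Sum>p\<in>S. (Pr (fst p) [snd p] - \<epsilon>') * p_lde M l (Suc d) \<epsilon>' (fst p)) \<le> p_lde M (Suc l) d \<epsilon> \<nu>'" for l
        by (rule push_bound[OF M fin hS' disj])
      have "ereal (\<Sum>p\<in>S. (Pr (fst p) [snd p] - \<epsilon>') * p_nu M (fst p)) \<le> liminf (\<lambda>l. ereal (p_lde M l d \<epsilon> \<nu>'))"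
      proof (rule liminf_lower[where I=S and c="\<lambda>p. Pr (fst p) [snd p] - \<epsilon>'" and r="\<lambda>p. p_nu M (fst p)"
            and b="\<lambda>p l. p_lde M l (Suc d) \<epsilon>' (fst p)" and a="\<lambda>l. p_lde M l d \<epsilon> \<nu>'"])
        show "finite S" by (rule fin)
        show "\<And>l. (\<Sum>p\<in>S. (Pr (fst p) [snd p] - \<epsilon>') * p_lde M l (Suc d) \<epsilon>' (fst p)) \<le> p_lde M (Suc l) d \<epsilon> \<nu>'"
          by (rule ab)
      next
        fix p assume p: "p \<in> S"
        show "0 \<le> Pr (fst p) [snd p] - \<epsilon>'" using hS'[OF p] hS[OF p] by auto
        have "p_nu M (fst p) \<le> fde M (Suc d) \<epsilon>' (fst p)"
          by (rule p_nu_char(1)[OF M _ e'(1)]) (use hS[OF p] in auto)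
        then have "ereal (p_nu M (fst p)) \<le> ereal (fde M (Suc d) \<epsilon>' (fst p))" by simp
        then show "ereal (p_nu M (fst p)) \<le> liminf (\<lambda>l. ereal (p_lde M l (Suc d) \<epsilon>' (fst p)))"
          unfolding fde_ereal[OF M] p_de_def .
      qed
      then have "ereal (\<Sum>p\<in>S. (Pr (fst p) [snd p] - \<epsilon>') * p_nu M (fst p)) \<le> ereal (fde M d \<epsilon> \<nu>')"
        unfolding fde_ereal[OF M] p_de_def .
      then have "(\<Sum>p\<in>S. (Pr (fst p) [snd p] - \<epsilon>') * p_nu M (fst p)) \<le> fde M d \<epsilon> \<nu>'" by simp
      moreover have "c - \<epsilon>' * K \<le> (\<Sum>p\<in>S. (Pr (fst p) [snd p] - \<epsilon>') * p_nu M (fst p))"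
      proof -
        have "(\<Sum>p\<in>S. (Pr (fst p) [snd p] - \<epsilon>') * p_nu M (fst p))
              = c - (\<Sum>p\<in>S. \<epsilon>' * p_nu M (fst p))"
          unfolding c_def sum_subtractf[symmetric] by (rule sum.cong) (auto simp: algebra_simps)
        moreover have "(\<Sum>p\<in>S. \<epsilon>' * p_nu M (fst p)) \<le> \<epsilon>' * K"
          unfolding K_def sum_distrib_left using e'(1)
          by (intro sum_mono mult_left_mono) auto
        ultimately show ?thesis by linarith
      qed
      ultimately show ?thesis by linarith
    qed
    show ?thesis
    proof (rule ccontr)
      assume "\<not> c \<le> fde M d \<epsilon> \<nu>'"
      then have gap: "c - fde M d \<epsilon> \<nu>' > 0" by simp
      define \<epsilon>' where "\<epsilon>' = min e0 ((c - fde M d \<epsilon> \<nu>') / (K + 1))"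
      have e'p: "\<epsilon>' > 0" unfolding \<epsilon>'_def using e0 gap K0 by simp
      have "\<epsilon>' * K \<le> (c - fde M d \<epsilon> \<nu>') / (K + 1) * K"
        unfolding \<epsilon>'_def using K0 by (intro mult_right_mono) auto
      also have "\<dots> < c - fde M d \<epsilon> \<nu>'"
        using gap K0 by (simp add: field_simps)
      finally have "c - \<epsilon>' * K > fde M d \<epsilon> \<nu>'" by simp
      moreover have "c - \<epsilon>' * K \<le> fde M d \<epsilon> \<nu>'" by (rule lb[OF e'p]) (simp add: \<epsilon>'_def)
      ultimately show False by simp
    qed
  qed
  show all: "c \<le> fde M d \<epsilon> \<nu>'" if "\<epsilon> > 0" for d \<epsilon>
  proof -
    have "c \<le> fde M (max d D) \<epsilon> \<nu>'" by (rule claim1) (use that in auto)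
    also have "\<dots> \<le> fde M d \<epsilon> \<nu>'" by (rule fde_mono[OF M \<nu>']) auto
    finally show ?thesis .
  qed
  show "c \<le> p_nu M \<nu>'"
    by (rule p_nu_char(2)[OF M \<nu>', of D]) (use all in \<open>auto intro: exI[of _ 1]\<close>)
qed



lemma Qplus_D:
  assumes "\<nu> \<in> Qplus M" shows "seq_prob \<nu>" "p_nu M \<nu> > 0"
  using assms by (auto simp: Qplus_def accumulation_state_def)

lemma sepQ:
  fixes Q :: "('a::finite) stream measure set"
  assumes fin: "finite Q" and sp: "\<And>\<nu>. \<nu> \<in> Q \<Longrightarrow> seq_prob \<nu>"
  shows "\<exists>D \<delta>. \<delta> > 0 \<and> (\<forall>\<nu>1\<in>Q. \<forall>\<nu>2\<in>Q. \<nu>1 \<noteq> \<nu>2 \<longrightarrow> (\<forall>d\<ge>D. dd d \<nu>1 \<nu>2 \<ge> \<delta>))"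
proof -
  define P where "P = {pr \<in> Q \<times> Q. fst pr \<noteq> snd pr}"
  have finP: "finite P" unfolding P_def using fin by simp
  have "\<forall>pr\<in>P. \<exists>d. dd d (fst pr) (snd pr) > 0"
    using separate sp unfolding P_def by auto
  then obtain ds where ds: "\<And>pr. pr \<in> P \<Longrightarrow> dd (ds pr) (fst pr) (snd pr) > 0" by metis
  define D where "D = Max (insert 0 (ds ` P))"
  have dsD: "ds pr \<le> D" if "pr \<in> P" for pr unfolding D_def using finP that by (intro Max_ge) auto
  define \<delta> where "\<delta> = Min (insert 1 ((\<lambda>pr. dd D (fst pr) (snd pr)) ` P))"
  have posD: "dd D (fst pr) (snd pr) > 0" if "pr \<in> P" for pr
  proof -
    have "fst pr \<in> Q" "snd pr \<in> Q" using that unfolding P_def by auto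
    then have "dd (ds pr) (fst pr) (snd pr) \<le> dd D (fst pr) (snd pr)"
      by (intro dd_mono sp dsD that)
    then show ?thesis using ds[OF that] by simp
  qed
  have \<delta>pos: "\<delta> > 0" unfolding \<delta>_def using finP posD by (subst Min_gr_iff) auto
  have "dd d \<nu>1 \<nu>2 \<ge> \<delta>" if "\<nu>1 \<in> Q" "\<nu>2 \<in> Q" "\<nu>1 \<noteq> \<nu>2" "d \<ge> D" for \<nu>1 \<nu>2 d
  proof -
    have pr: "(\<nu>1, \<nu>2) \<in> P" unfolding P_def using that by simp
    have "\<delta> \<le> dd D \<nu>1 \<nu>2" unfolding \<delta>_def using finP pr by (intro Min_le) force+
    also have "\<dots> \<le> dd d \<nu>1 \<nu>2" by (rule dd_mono) (use that sp in auto)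
    finally show ?thesis .
  qed
  then show ?thesis using \<delta>pos by blast
qed

lemma sum_le_eq:
  fixes f g :: "'b \<Rightarrow> real"
  assumes "finite A" "\<And>x. x \<in> A \<Longrightarrow> f x \<le> g x" "sum f A = sum g A" "x \<in> A"
  shows "f x = g x"
proof -
  have "sum (\<lambda>x. g x - f x) A = 0" using assms(3) by (simp add: sum_subtractf)
  then have "\<forall>x\<in>A. g x - f x = 0"
    using sum_nonneg_eq_0_iff[OF assms(1), of "\<lambda>x. g x - f x"] assms(2) by auto
  then show ?thesis using assms(4) by simp
qed

lemma Pr_sigma_sum:
  fixes \<nu> :: "('a::finite) stream measure"
  assumes "seq_prob \<nu>" shows "(\<Sum>\<sigma>\<in>UNIV. Pr \<nu> [\<sigma>]) = 1"
proof -
  have "(\<Sum>\<sigma>\<in>UNIV. Pr \<nu> [\<sigma>]) = (\<Sum>w\<in>{w. length w = 1}. Pr \<nu> w)"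
    by (rule sum.reindex_bij_witness[where i="\<lambda>w. hd w" and j="\<lambda>\<sigma>. [\<sigma>]"])
       (auto simp: length_Suc_conv)
  also have "\<dots> = 1" by (rule Pr_sum1[OF assms])
  finally show ?thesis .
qed

lemma tm_eq:
  fixes \<nu> :: "('a::finite) stream measure"
  shows "trans_mat G_delta G_pit \<nu> \<nu>' = (\<Sum>\<sigma>\<in>UNIV. if future \<nu> [\<sigma>] = \<nu>' then Pr \<nu> [\<sigma>] else 0)"
  unfolding trans_mat_def G_delta_def G_pit_def
  by (subst sum.inter_filter[symmetric]) simp_all



lemma closure_Q:
  fixes M :: "('a::finite) stream measure"
  assumes M: "seq_prob M" and \<nu>: "\<nu> \<in> Qplus M" and b: "Pr \<nu> [\<sigma>] > 0"
  shows "future \<nu> [\<sigma>] \<in> Qplus M"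
proof -
  define \<nu>' where "\<nu>' = future \<nu> [\<sigma>]"
  have s\<nu>: "seq_prob \<nu>" and p\<nu>: "p_nu M \<nu> > 0" using Qplus_D[OF \<nu>] by auto
  have s\<nu>': "seq_prob \<nu>'" unfolding \<nu>'_def by (rule future_props(1)[OF s\<nu> b])
  define c where "c = Pr \<nu> [\<sigma>] * p_nu M \<nu>"
  have cs: "(\<Sum>p\<in>{(\<nu>, \<sigma>)}. Pr (fst p) [snd p] * p_nu M (fst p)) = c" unfolding c_def by simp
  have c: "c > 0" unfolding c_def using b p\<nu> by simp
  have L1: "c \<le> fde M d \<epsilon> \<nu>'" if "\<epsilon> > 0" for d \<epsilon>
  proof -
    have "(\<Sum>p\<in>{(\<nu>, \<sigma>)}. Pr (fst p) [snd p] * p_nu M (fst p)) \<le> fde M d \<epsilon> \<nu>'"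
      by (rule main_lb(1)[where \<delta>=1 and D=0]) (use M s\<nu>' s\<nu> b that in \<open>auto simp: \<nu>'_def\<close>)
    then show ?thesis unfolding cs .
  qed
  have L2: "c \<le> p_nu M \<nu>'"
  proof -
    have "(\<Sum>p\<in>{(\<nu>, \<sigma>)}. Pr (fst p) [snd p] * p_nu M (fst p)) \<le> p_nu M \<nu>'"
      by (rule main_lb(2)[where \<delta>=1 and D=0]) (use M s\<nu>' s\<nu> b in \<open>auto simp: \<nu>'_def\<close>)
    then show ?thesis unfolding cs .
  qed
  have pde: "p_de M d \<epsilon> \<nu>' > 0" if "\<epsilon> > 0" for d \<epsilon>
  proof -
    have "ereal 0 < ereal c" using c by simp
    also have "ereal c \<le> ereal (fde M d \<epsilon> \<nu>')" using L1[OF that] by simp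
    finally show ?thesis unfolding fde_ereal[OF M] by (simp add: zero_ereal_def)
  qed
  have "p_nu M \<nu>' > 0" using c L2 by simp
  then show ?thesis unfolding \<nu>'_def[symmetric] Qplus_def accumulation_state_def
    using s\<nu>' pde by auto
qed

lemma stat_lb:
  fixes M :: "('a::finite) stream measure"
  assumes M: "seq_prob M" and fin: "finite (Qplus M)" and \<nu>': "\<nu>' \<in> Qplus M"
  shows "(\<Sum>\<nu>\<in>Qplus M. p_nu M \<nu> * trans_mat G_delta G_pit \<nu> \<nu>') \<le> p_nu M \<nu>'"
proof -
  define Q where "Q = Qplus M"
  have sQ: "\<And>\<nu>. \<nu> \<in> Q \<Longrightarrow> seq_prob \<nu>" unfolding Q_def using Qplus_D by blast
  obtain D \<delta> where \<delta>: "\<delta> > 0" and sep: "\<And>\<nu>1 \<nu>2 d. \<nu>1 \<in> Q \<Longrightarrow> \<nu>2 \<in> Q \<Longrightarrow> \<nu>1 \<noteq> \<nu>2 \<Longrightarrow> d \<ge> D \<Longrightarrow> dd d \<nu>1 \<nu>2 \<ge> \<delta>"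
    using sepQ[OF fin[folded Q_def] sQ] by blast
  define S where "S = {p \<in> Q \<times> UNIV. Pr (fst p) [snd p] > 0 \<and> future (fst p) [snd p] = \<nu>'}"
  have finS: "finite S" unfolding S_def using fin[folded Q_def] by simp
  have "(\<Sum>p\<in>S. Pr (fst p) [snd p] * p_nu M (fst p)) \<le> p_nu M \<nu>'"
  proof (rule main_lb(2)[OF M finS _ _ \<delta>])
    show "seq_prob \<nu>'" using Qplus_D(1)[OF \<nu>'] .
    show "\<And>p. p \<in> S \<Longrightarrow> seq_prob (fst p) \<and> Pr (fst p) [snd p] > 0 \<and> future (fst p) [snd p] = \<nu>'"
      unfolding S_def using sQ by auto
    show "\<And>p q d. p \<in> S \<Longrightarrow> q \<in> S \<Longrightarrow> fst p \<noteq> fst q \<Longrightarrow> d \<ge> D \<Longrightarrow> dd d (fst p) (fst q) \<ge> \<delta>"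
      unfolding S_def using sep by auto
  qed
  moreover have "(\<Sum>\<nu>\<in>Q. p_nu M \<nu> * trans_mat G_delta G_pit \<nu> \<nu>') = (\<Sum>p\<in>S. Pr (fst p) [snd p] * p_nu M (fst p))"
  proof -
    have "(\<Sum>\<nu>\<in>Q. p_nu M \<nu> * trans_mat G_delta G_pit \<nu> \<nu>')
        = (\<Sum>\<nu>\<in>Q. \<Sum>\<sigma>\<in>UNIV. if future \<nu> [\<sigma>] = \<nu>' then p_nu M \<nu> * Pr \<nu> [\<sigma>] else 0)"
      unfolding tm_eq sum_distrib_left by (intro sum.cong refl) simp
    also have "\<dots> = (\<Sum>p\<in>Q \<times> UNIV. if future (fst p) [snd p] = \<nu>' then p_nu M (fst p) * Pr (fst p) [snd p] else 0)"
      by (simp add: sum.cartesian_product split_def)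
    also have "\<dots> = (\<Sum>p\<in>Q \<times> UNIV. if Pr (fst p) [snd p] > 0 \<and> future (fst p) [snd p] = \<nu>'
                         then Pr (fst p) [snd p] * p_nu M (fst p) else 0)"
    proof (rule sum.cong[OF refl])
      fix p :: "'a stream measure \<times> 'a"
      have "Pr (fst p) [snd p] \<ge> 0" by (rule Pr_nonneg)
      then show "(if future (fst p) [snd p] = \<nu>' then p_nu M (fst p) * Pr (fst p) [snd p] else 0) =
        (if Pr (fst p) [snd p] > 0 \<and> future (fst p) [snd p] = \<nu>' then Pr (fst p) [snd p] * p_nu M (fst p) else 0)"
        by auto
    qed
    also have "\<dots> = (\<Sum>p\<in>S. Pr (fst p) [snd p] * p_nu M (fst p))"
      unfolding S_def by (rule sum.inter_filter[symmetric]) (use fin[folded Q_def] in simp)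
    finally show ?thesis .
  qed
  ultimately show ?thesis unfolding Q_def by simp
qed

lemma stat_sum:
  fixes M :: "('a::finite) stream measure"
  assumes M: "seq_prob M" and fin: "finite (Qplus M)" and one: "(\<Sum>\<nu>\<in>Qplus M. p_nu M \<nu>) = 1"
  shows "(\<Sum>\<nu>'\<in>Qplus M. \<Sum>\<nu>\<in>Qplus M. p_nu M \<nu> * trans_mat G_delta G_pit \<nu> \<nu>') = 1"
proof -
  define Q where "Q = Qplus M"
  have inner: "(\<Sum>\<nu>'\<in>Q. trans_mat G_delta G_pit \<nu> \<nu>') = 1" if \<nu>: "\<nu> \<in> Q" for \<nu>
  proof -
    have "(\<Sum>\<nu>'\<in>Q. trans_mat G_delta G_pit \<nu> \<nu>')
        = (\<Sum>\<sigma>\<in>UNIV. \<Sum>\<nu>'\<in>Q. if future \<nu> [\<sigma>] = \<nu>' then Pr \<nu> [\<sigma>] else 0)"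
      unfolding tm_eq by (rule sum.swap)
    also have "\<dots> = (\<Sum>\<sigma>\<in>UNIV. if future \<nu> [\<sigma>] \<in> Q then Pr \<nu> [\<sigma>] else 0)"
      using fin[folded Q_def] by (simp add: sum.delta)
    also have "\<dots> = (\<Sum>\<sigma>\<in>UNIV. Pr \<nu> [\<sigma>])"
    proof (rule sum.cong[OF refl])
      fix \<sigma>
      show "(if future \<nu> [\<sigma>] \<in> Q then Pr \<nu> [\<sigma>] else 0) = Pr \<nu> [\<sigma>]"
      proof (cases "Pr \<nu> [\<sigma>] > 0")
        case True
        then have "future \<nu> [\<sigma>] \<in> Q" using closure_Q[OF M \<nu>[unfolded Q_def]] unfolding Q_def by blast
        then show ?thesis by simp
      next
        case False
        then have "Pr \<nu> [\<sigma>] = 0" using Pr_nonneg[of \<nu> "[\<sigma>]"] by simp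
        then show ?thesis by simp
      qed
    qed
    also have "\<dots> = 1" by (rule Pr_sigma_sum[OF Qplus_D(1)[OF \<nu>[unfolded Q_def]]])
    finally show ?thesis .
  qed
  have "(\<Sum>\<nu>'\<in>Q. \<Sum>\<nu>\<in>Q. p_nu M \<nu> * trans_mat G_delta G_pit \<nu> \<nu>')
      = (\<Sum>\<nu>\<in>Q. p_nu M \<nu> * (\<Sum>\<nu>'\<in>Q. trans_mat G_delta G_pit \<nu> \<nu>'))"
    unfolding sum_distrib_left by (rule sum.swap)
  also have "\<dots> = (\<Sum>\<nu>\<in>Q. p_nu M \<nu>)" by (rule sum.cong) (simp_all add: inner)
  finally show ?thesis using one unfolding Q_def by simp
qed



lemma pr_lb:
  fixes M :: "('a::finite) stream measure"
  assumes M: "seq_prob M" and st: "stationary_proc M" and fin: "finite (Qplus M)"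
    and one: "(\<Sum>\<nu>\<in>Qplus M. p_nu M \<nu>) = 1"
  shows "(\<Sum>\<nu>\<in>Qplus M. p_nu M \<nu> * Pr \<nu> x) \<le> Pr M x"
proof -
  define Q where "Q = Qplus M"
  have finQ: "finite Q" using fin unfolding Q_def .
  have sQ: "\<And>\<nu>. \<nu> \<in> Q \<Longrightarrow> seq_prob \<nu>" unfolding Q_def using Qplus_D by blast
  have pQ: "\<And>\<nu>. \<nu> \<in> Q \<Longrightarrow> p_nu M \<nu> > 0" unfolding Q_def using Qplus_D by blast
  obtain D \<delta> where \<delta>: "\<delta> > 0" and sep: "\<And>\<nu>1 \<nu>2 d. \<nu>1 \<in> Q \<Longrightarrow> \<nu>2 \<in> Q \<Longrightarrow> \<nu>1 \<noteq> \<nu>2 \<Longrightarrow> d \<ge> D \<Longrightarrow> dd d \<nu>1 \<nu>2 \<ge> \<delta>"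
    using sepQ[OF finQ sQ] by blast
  define q where "q = (\<Sum>\<nu>\<in>Q. p_nu M \<nu> * Pr \<nu> x)"
  have lb: "q - \<epsilon> \<le> Pr M x" if e: "0 < \<epsilon>" "2 * \<epsilon> \<le> \<delta>" for \<epsilon>
  proof -
    define d where "d = max D (length x)"
    define c where "c \<nu> = max 0 (Pr \<nu> x - \<epsilon>)" for \<nu>
    have disj: "idx M l d \<epsilon> \<nu>1 \<inter> idx M l d \<epsilon> \<nu>2 = {}"
      if "\<nu>1 \<in> Q" "\<nu>2 \<in> Q" "\<nu>1 \<noteq> \<nu>2" for \<nu>1 \<nu>2 l
      by (rule ball_disj[OF sep[OF that]]) (use e in \<open>auto simp: d_def\<close>)
    have ab: "(\<Sum>\<nu>\<in>Q. c \<nu> * p_lde M l d \<epsilon> \<nu>) \<le> Pr M x" for l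
    proof -
      have "(\<Sum>\<nu>\<in>Q. c \<nu> * p_lde M l d \<epsilon> \<nu>) = (\<Sum>\<nu>\<in>Q. \<Sum>y\<in>idx M l d \<epsilon> \<nu>. c \<nu> * Pr M y)"
        unfolding p_lde_idx sum_distrib_left ..
      also have "\<dots> \<le> (\<Sum>\<nu>\<in>Q. \<Sum>y\<in>idx M l d \<epsilon> \<nu>. Pr M (y @ x))"
      proof (intro sum_mono)
        fix \<nu> y assume \<nu>: "\<nu> \<in> Q" and y: "y \<in> idx M l d \<epsilon> \<nu>"
        have py: "Pr M y > 0" and sf: "seq_prob (future M y)" and dy: "dd d (future M y) \<nu> < \<epsilon>"
          using y by (auto simp: idx_def ball_de_iff)
        have "\<bar>Pr (future M y) x - Pr \<nu> x\<bar> \<le> dd d (future M y) \<nu>"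
          by (rule dd_prefix[OF sf sQ[OF \<nu>]]) (simp add: d_def)
        then have "c \<nu> \<le> Pr (future M y) x" unfolding c_def using dy Pr_nonneg[of "future M y" x] by simp
        then have "c \<nu> * Pr M y \<le> Pr (future M y) x * Pr M y" using py by (simp add: mult_right_mono)
        also have "\<dots> = Pr M (y @ x)" using future_props(2)[OF M py, of x] py by simp
        finally show "c \<nu> * Pr M y \<le> Pr M (y @ x)" .
      qed
      also have "\<dots> = (\<Sum>y\<in>(\<Union>\<nu>\<in>Q. idx M l d \<epsilon> \<nu>). Pr M (y @ x))"
        by (rule sum.UNION_disjoint[symmetric]) (use finQ disj in \<open>auto simp: idx_finite\<close>)
      also have "\<dots> \<le> (\<Sum>y\<in>{y. length y = l}. Pr M (y @ x))"
        by (rule sum_mono2[OF words_finite]) (auto simp: idx_def Pr_nonneg)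
      also have "\<dots> = Pr M x" by (rule Pr_stationary[OF M st, symmetric])
      finally show ?thesis .
    qed
    have "ereal (\<Sum>\<nu>\<in>Q. c \<nu> * p_nu M \<nu>) \<le> liminf (\<lambda>l. ereal (Pr M x))"
    proof (rule liminf_lower[where I=Q and c=c and r="\<lambda>\<nu>. p_nu M \<nu>"
            and b="\<lambda>\<nu> l. p_lde M l d \<epsilon> \<nu>" and a="\<lambda>l. Pr M x"])
      show "finite Q" by (rule finQ)
      show "\<And>l. (\<Sum>\<nu>\<in>Q. c \<nu> * p_lde M l d \<epsilon> \<nu>) \<le> Pr M x" by (rule ab)
    next
      fix \<nu> assume \<nu>: "\<nu> \<in> Q"
      show "0 \<le> c \<nu>" unfolding c_def by simp
      have "p_nu M \<nu> \<le> fde M d \<epsilon> \<nu>" by (rule p_nu_char(1)[OF M sQ[OF \<nu>] e(1)])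
      then have "ereal (p_nu M \<nu>) \<le> ereal (fde M d \<epsilon> \<nu>)" by simp
      then show "ereal (p_nu M \<nu>) \<le> liminf (\<lambda>l. ereal (p_lde M l d \<epsilon> \<nu>))"
        unfolding fde_ereal[OF M] p_de_def .
    qed
    then have 1: "(\<Sum>\<nu>\<in>Q. c \<nu> * p_nu M \<nu>) \<le> Pr M x" by (simp add: Liminf_const)
    have e1: "(\<Sum>\<nu>\<in>Q. \<epsilon> * p_nu M \<nu>) = \<epsilon>"
      using one[folded Q_def] by (simp add: sum_distrib_left[symmetric])
    have "(\<Sum>\<nu>\<in>Q. (Pr \<nu> x - \<epsilon>) * p_nu M \<nu>) = q - (\<Sum>\<nu>\<in>Q. \<epsilon> * p_nu M \<nu>)"
      unfolding q_def sum_subtractf[symmetric] by (rule sum.cong) (auto simp: algebra_simps)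
    then have "q - \<epsilon> = (\<Sum>\<nu>\<in>Q. (Pr \<nu> x - \<epsilon>) * p_nu M \<nu>)" using e1 by simp
    also have "\<dots> \<le> (\<Sum>\<nu>\<in>Q. c \<nu> * p_nu M \<nu>)"
      by (rule sum_mono) (use pQ in \<open>auto simp: c_def intro!: mult_right_mono\<close>)
    finally show ?thesis using 1 by simp
  qed
  show ?thesis
  proof (rule ccontr)
    assume "\<not> ?thesis"
    then have gap: "q - Pr M x > 0" unfolding q_def Q_def by simp
    define \<epsilon> where "\<epsilon> = min (\<delta> / 2) ((q - Pr M x) / 2)"
    have "q - \<epsilon> \<le> Pr M x" by (rule lb) (use \<delta> gap in \<open>auto simp: \<epsilon>_def\<close>)
    moreover have "\<epsilon> \<le> (q - Pr M x) / 2" unfolding \<epsilon>_def by (rule min.cobounded2)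
    ultimately have "q - Pr M x \<le> (q - Pr M x) / 2" by simp
    then show False using gap by simp
  qed
qed

lemma pr_eq:
  fixes M :: "('a::finite) stream measure"
  assumes M: "seq_prob M" and st: "stationary_proc M" and fin: "finite (Qplus M)"
    and one: "(\<Sum>\<nu>\<in>Qplus M. p_nu M \<nu>) = 1"
  shows "Pr M x = (\<Sum>\<nu>\<in>Qplus M. p_nu M \<nu> * Pr \<nu> x)"
proof -
  define Q where "Q = Qplus M"
  define W where "W = {w :: 'a list. length w = length x}"
  have sQ: "\<And>\<nu>. \<nu> \<in> Q \<Longrightarrow> seq_prob \<nu>" unfolding Q_def using Qplus_D by blast
  have "(\<Sum>w\<in>W. \<Sum>\<nu>\<in>Q. p_nu M \<nu> * Pr \<nu> w) = (\<Sum>\<nu>\<in>Q. p_nu M \<nu> * (\<Sum>w\<in>W. Pr \<nu> w))"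
    unfolding sum_distrib_left by (rule sum.swap)
  also have "\<dots> = (\<Sum>\<nu>\<in>Q. p_nu M \<nu>)"
    by (rule sum.cong[OF refl]) (simp add: W_def Pr_sum1[OF sQ])
  also have "\<dots> = (\<Sum>w\<in>W. Pr M w)" using one Pr_sum1[OF M] unfolding Q_def W_def by simp
  finally have eq: "(\<Sum>w\<in>W. \<Sum>\<nu>\<in>Q. p_nu M \<nu> * Pr \<nu> w) = (\<Sum>w\<in>W. Pr M w)" .
  have "(\<Sum>\<nu>\<in>Q. p_nu M \<nu> * Pr \<nu> x) = Pr M x"
    by (rule sum_le_eq[where A=W, OF _ _ eq]) (use pr_lb[OF M st fin one] in \<open>auto simp: W_def Q_def words_finite\<close>)
  then show ?thesis unfolding Q_def by simp
qed

theorem mainTheorem5: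
  fixes M :: "('a::finite) stream measure"
  assumes "seq_prob M"
    and "stationary_proc M"
    and "ergodic_proc M"
    and "finite (Qplus M)"
    and "(\<Sum>\<nu>\<in>Qplus M. p_nu M \<nu>) = 1"
  shows "(\<forall>\<nu>\<in>Qplus M. \<forall>\<sigma>. G_pit \<nu> \<sigma> > 0 \<longrightarrow> G_delta \<nu> \<sigma> \<in> Qplus M)
    \<and> stationary_dist (Qplus M) (trans_mat G_delta G_pit) (p_nu M)
    \<and> (\<forall>x. Pr M x = (\<Sum>\<nu>\<in>Qplus M. p_nu M \<nu> * word_prob G_delta G_pit \<nu> x))"
proof (intro conjI)
  note M = assms(1) and st = assms(2) and fin = assms(4) and one = assms(5)
  show "\<forall>\<nu>\<in>Qplus M. \<forall>\<sigma>. G_pit \<nu> \<sigma> > 0 \<longrightarrow> G_delta \<nu> \<sigma> \<in> Qplus M"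
    unfolding G_pit_def G_delta_def using closure_Q[OF M] by blast
  show "stationary_dist (Qplus M) (trans_mat G_delta G_pit) (p_nu M)"
    unfolding stationary_dist_def
  proof (intro conjI ballI)
    show "\<And>q. q \<in> Qplus M \<Longrightarrow> 0 \<le> p_nu M q" using Qplus_D(2) less_imp_le by blast
    show "(\<Sum>q\<in>Qplus M. p_nu M q) = 1" by (rule one)
    fix q' assume q': "q' \<in> Qplus M"
    show "(\<Sum>q\<in>Qplus M. p_nu M q * trans_mat G_delta G_pit q q') = p_nu M q'"
    proof (rule sum_le_eq[where A="Qplus M" and f="\<lambda>q'. \<Sum>q\<in>Qplus M. p_nu M q * trans_mat G_delta G_pit q q'"])
      show "finite (Qplus M)" by (rule fin)
      show "\<And>x. x \<in> Qplus M \<Longrightarrow> (\<Sum>q\<in>Qplus M. p_nu M q * trans_mat G_delta G_pit q x) \<le> p_nu M x"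
        by (rule stat_lb[OF M fin])
      show "(\<Sum>x\<in>Qplus M. \<Sum>q\<in>Qplus M. p_nu M q * trans_mat G_delta G_pit q x) = (\<Sum>x\<in>Qplus M. p_nu M x)"
        using stat_sum[OF M fin one] one by simp
      show "q' \<in> Qplus M" by (rule q')
    qed
  qed
  show "\<forall>x. Pr M x = (\<Sum>\<nu>\<in>Qplus M. p_nu M \<nu> * word_prob G_delta G_pit \<nu> x)"
  proof
    fix x
    have "(\<Sum>\<nu>\<in>Qplus M. p_nu M \<nu> * word_prob G_delta G_pit \<nu> x) = (\<Sum>\<nu>\<in>Qplus M. p_nu M \<nu> * Pr \<nu> x)"
      by (rule sum.cong[OF refl]) (simp add: word_prob_Pr Qplus_D(1))
    then show "Pr M x = (\<Sum>\<nu>\<in>Qplus M. p_nu M \<nu> * word_prob G_delta G_pit \<nu> x)"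
      using pr_eq[OF M st fin one] by simp
  qed
qed


end
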